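(* Let $M,m\in\mathbb{N}$ and $f=\prod_{i=1}^mf_i$ with $f_1,\dots,f_m$ entire functions. Then $$\min_{0\le t\le M}\nu^0_{\mathcal{A}_{q^{M-t}}\mathcal{D}_q^tf}(x)\ge\sum_{i=1}^m\min_{0\le t\le M}\nu^0_{\mathcal{A}_{q^{M-t}}\mathcal{D}_q^tf_i}(x)$$ for all $x\in\mathbb{C}$ with $|x|>\mathcal{R}(M,q)$.
   Context: Fix $q\in\mathbb{C}$ with $0<|q|<1$. Every $x\in\mathbb{C}$ is written uniquely as $x=\frac{z+z^{-1}}{2}$ with $|z|\ge 1$ (when $|z|=1$, $z=x+i\sqrt{1-x^2}$). $(\eta_q f)(x)=f\big(\tfrac{q^{1/2}z+q^{-1/2}z^{-1}}{2}\big)$, $(\eta_q^{-1}f)(x)=f\big(\tfrac{q^{-1/2}z+q^{1/2}z^{-1}}{2}\big)$, $\eta_q^{\pm k}$ the $k$-fold compositions; $(\eta_{q^{\pm k}}f)(x)=f\big(\tfrac{q^{\pm k/2}z+q^{\mp k/2}z^{-1}}{2}\big)$. $\mathcal{R}(M,q)>0$ is a constant such that for $|x|>\mathcal{R}(M,q)$ one has $\eta_q^{\pm k}f=\eta_{q^{\pm k}}f$ for $0\le k\le M$ and the shifts compose additively. Askey-Wilson operator $(\mathcal{D}_qf)(x)=\frac{(\eta_qf)(x)-(\eta_q^{-1}f)(x)}{\eta_qx-\eta_q^{-1}x}$ ($x\ne\pm1$; limit at $\pm1$), $\mathcal{D}_q^0f=f$, $\mathcal{D}_q^k=\mathcal{D}_q\circ\mathcal{D}_q^{k-1}$;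 $(\mathcal{A}_{q^k}f)(x)=\frac{(\eta_{q^k}f)(x)+(\eta_{q^{-k}}f)(x)}{2}$, $\mathcal{A}_{q^0}f=f$. $\nu^0_g(x)\ge0$ is the order of zero of $g$ at $x$. *)

theory Defs
  imports "HOL-Complex_Analysis.Complex_Analysis"
begin

text \<open>The parameter z of x: x = (z + 1/z)/2 with |z| >= 1; on the segment [-1,1]
  (where |z| = 1) the convention z = x + i sqrt(1 - x^2) is used.\<close>
definition zc :: "complex \<Rightarrow> complex" where
  "zc x = (if Im x = 0 \<and> \<bar>Re x\<bar> \<le> 1 then x + \<i> * complex_of_real (sqrt (1 - (Re x)\<^sup>2))
           else (THE z. 1 \<le> cmod z \<and> x = (z + inverse z) / 2))"

definition sig :: "complex \<Rightarrow> complex \<Rightarrow> complex" where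
  "sig s x = (s * zc x + inverse (s * zc x)) / 2"

text \<open>q^{1/2} is the principal square root; q^{k/2} := (q^{1/2})^k.\<close>
definition eta :: "complex \<Rightarrow> (complex \<Rightarrow> complex) \<Rightarrow> complex \<Rightarrow> complex" where
  "eta q f x = f (sig (csqrt q) x)"

definition etainv :: "complex \<Rightarrow> (complex \<Rightarrow> complex) \<Rightarrow> complex \<Rightarrow> complex" where
  "etainv q f x = f (sig (inverse (csqrt q)) x)"

text \<open>etaP q k f = eta_{q^k} f for an integer k (so eta_{q^{-k}} = etaP q (-k)).\<close>
definition etaP :: "complex \<Rightarrow> int \<Rightarrow> (complex \<Rightarrow> complex) \<Rightarrow> complex \<Rightarrow> complex" where
  "etaP q k f x = f (sig (csqrt q powi k) x)"

definition AW_quot :: "complex \<Rightarrow> (complex \<Rightarrow> complex) \<Rightarrow> complex \<Rightarrow> complex" where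
  "AW_quot q f x = (eta q f x - etainv q f x) / (eta q id x - etainv q id x)"

definition AW :: "complex \<Rightarrow> (complex \<Rightarrow> complex) \<Rightarrow> complex \<Rightarrow> complex" where
  "AW q f x = (if x = 1 \<or> x = -1 then Lim (at x) (AW_quot q f) else AW_quot q f x)"

definition Aop :: "complex \<Rightarrow> nat \<Rightarrow> (complex \<Rightarrow> complex) \<Rightarrow> complex \<Rightarrow> complex" where
  "Aop q k f x = (if k = 0 then f x else (etaP q (int k) f x + etaP q (- int k) f x) / 2)"

definition nu0 :: "(complex \<Rightarrow> complex) \<Rightarrow> complex \<Rightarrow> enat" where
  "nu0 g x = Sup {enat n | n. \<exists>h r. 0 < r \<and> h holomorphic_on ball x r \<and>
                    (\<forall>w\<in>ball x r. g w = (w - x) ^ n * h w)}"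

text \<open>The defining property of the constant R(M,q).\<close>
definition R_ok :: "complex \<Rightarrow> nat \<Rightarrow> real \<Rightarrow> bool" where
  "R_ok q M R \<longleftrightarrow> 0 < R \<and>
     (\<forall>y f. R < cmod y \<longrightarrow>
        (\<forall>k\<le>M. (eta q ^^ k) f y = etaP q (int k) f y \<and> (etainv q ^^ k) f y = etaP q (- int k) f y) \<and>
        (\<forall>a b::int. \<bar>a\<bar> \<le> int M \<and> \<bar>b\<bar> \<le> int M \<and> \<bar>a + b\<bar> \<le> int M \<longrightarrow>
           etaP q a (etaP q b f) y = etaP q (a + b) f y))"

end

theory Submission
  imports Defs
begin

definition seg :: "complex set" where "seg = {t. Im t = 0 \<and> \<bar>Re t\<bar> \<le> 1}"

definition gz :: "complex \<Rightarrow> complex" where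
  "gz y = y * (1 + csqrt (1 - 1 / y\<^sup>2))"

lemma norm1_inverse_cnj: assumes "cmod g = 1" shows "inverse g = cnj g"
proof -
  have "(Re g)\<^sup>2 + (Im g)\<^sup>2 = 1" using assms cmod_power2[of g] by simp
  hence "g * cnj g = 1" by (simp add: complex_mult_cnj)
  thus ?thesis by (metis inverse_unique)
qed

lemma zc_seg:
  assumes "y \<in> seg"
  shows "cmod (zc y) = 1" "(zc y + inverse (zc y)) / 2 = y"
proof -
  have im: "Im y = 0" and re: "\<bar>Re y\<bar> \<le> 1" using assms by (auto simp: seg_def)
  have z: "zc y = Complex (Re y) (sqrt (1 - (Re y)\<^sup>2))"
    using im re by (simp add: zc_def complex_eq_iff)
  have sq: "(Re y)\<^sup>2 \<le> 1" using re abs_le_square_iff[of "Re y" 1] by simp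
  show n: "cmod (zc y) = 1" unfolding z cmod_def using sq by simp
  show "(zc y + inverse (zc y)) / 2 = y"
    using norm1_inverse_cnj[OF n] im by (simp add: z complex_eq_iff)
qed

lemma seg_sq:
  assumes "y\<^sup>2 = complex_of_real p" "0 < p" "p \<le> 1"
  shows "y \<in> seg"
proof -
  have "Im (y\<^sup>2) = 0" "Re (y\<^sup>2) = p" using assms by auto
  hence a: "2 * Re y * Im y = 0" and b: "(Re y)\<^sup>2 - (Im y)\<^sup>2 = p"
    by (auto simp: power2_eq_square)
  have "Im y = 0"
  proof (rule ccontr)
    assume "Im y \<noteq> 0" hence "Re y = 0" using a by simp
    with b have "- (Im y)\<^sup>2 = p" by simp
    moreover have "0 \<le> (Im y)\<^sup>2" by simp
    ultimately show False using assms(2) by linarith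
  qed
  with b assms(3) have "(Re y)\<^sup>2 \<le> 1" by simp
  hence "\<bar>Re y\<bar> \<le> 1" by (simp add: abs_square_le_1)
  with \<open>Im y = 0\<close> show ?thesis by (simp add: seg_def)
qed

lemma not_seg_arg:
  assumes "y \<notin> seg" shows "y \<noteq> 0" "1 - 1 / y\<^sup>2 \<notin> \<real>\<^sub>\<le>\<^sub>0"
proof -
  show "y \<noteq> 0" using assms by (auto simp: seg_def)
  show "1 - 1 / y\<^sup>2 \<notin> \<real>\<^sub>\<le>\<^sub>0"
  proof
    assume "1 - 1 / y\<^sup>2 \<in> \<real>\<^sub>\<le>\<^sub>0"
    then obtain t where t: "1 - 1 / y\<^sup>2 = of_real t" "t \<le> 0" by (auto elim: nonpos_Reals_cases)
    have "1 / y\<^sup>2 = of_real (1 - t)" using t by (simp add: algebra_simps)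
    hence "y\<^sup>2 = of_real (1 / (1 - t))" using \<open>y \<noteq> 0\<close>
      by (metis inverse_eq_divide inverse_inverse_eq of_real_inverse)
    moreover have "0 < 1 / (1 - t)" "1 / (1 - t) \<le> 1" using t by auto
    ultimately have "y \<in> seg" by (rule seg_sq)
    with assms show False by simp
  qed
qed

lemma gz_props:
  assumes "y \<notin> seg"
  shows "1 \<le> cmod (gz y)" "(gz y + inverse (gz y)) / 2 = y"
    "\<And>z. 1 \<le> cmod z \<Longrightarrow> y = (z + inverse z) / 2 \<Longrightarrow> z = gz y"
proof -
  have y0: "y \<noteq> 0" using not_seg_arg[OF assms] by simp
  define c where "c = csqrt (1 - 1 / y\<^sup>2)"
  have c2: "c\<^sup>2 = 1 - 1 / y\<^sup>2" by (simp add: c_def)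
  define g' where "g' = y * (1 - c)"
  have g: "gz y = y * (1 + c)" by (simp add: gz_def c_def)
  have prod: "gz y * g' = 1"
  proof -
    have "gz y * g' = y\<^sup>2 * (1 - c\<^sup>2)" by (simp add: g g'_def power2_eq_square algebra_simps)
    also have "\<dots> = 1" using y0 by (simp add: c2 field_simps)
    finally show ?thesis .
  qed
  hence inv: "inverse (gz y) = g'" by (metis inverse_unique)
  have "cmod (1 - c) \<le> cmod (1 + c)"
  proof -
    have "0 \<le> Re c" unfolding c_def by (rule Re_csqrt)
    have e1: "(cmod (1 - c))\<^sup>2 = (1 - Re c)\<^sup>2 + (Im c)\<^sup>2" by (simp add: cmod_power2)
    have e2: "(cmod (1 + c))\<^sup>2 = (1 + Re c)\<^sup>2 + (Im c)\<^sup>2" by (simp add: cmod_power2)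
    have "(cmod (1 - c))\<^sup>2 \<le> (cmod (1 + c))\<^sup>2"
      unfolding e1 e2 using \<open>0 \<le> Re c\<close> by (simp add: power2_eq_square algebra_simps)
    thus ?thesis by (simp add: power2_le_iff_abs_le)
  qed
  hence le: "cmod g' \<le> cmod (gz y)" by (simp add: g g'_def norm_mult mult_left_mono)
  have p1: "cmod (gz y) * cmod g' = 1" using prod by (metis norm_mult norm_one)
  show ge1: "1 \<le> cmod (gz y)"
  proof (rule ccontr)
    assume "\<not> 1 \<le> cmod (gz y)"
    hence "cmod (gz y) * cmod g' < 1 * 1" using le
      by (intro mult_strict_mono') auto
    with p1 show False by simp
  qed
  have sum: "gz y + g' = 2 * y" by (simp add: g g'_def algebra_simps)
  show "(gz y + inverse (gz y)) / 2 = y" using sum inv by simp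
  fix z assume z1: "1 \<le> cmod z" and yz: "y = (z + inverse z) / 2"
  have z0: "z \<noteq> 0" using z1 by auto
  have "(z - gz y) * (z - g') = z\<^sup>2 - (gz y + g') * z + gz y * g'"
    by (simp add: power2_eq_square algebra_simps)
  also have "\<dots> = z\<^sup>2 - 2 * y * z + 1" by (simp only: sum prod)
  also have "2 * y * z = z\<^sup>2 + 1" using yz z0 by (simp add: field_simps power2_eq_square)
  hence "z\<^sup>2 - 2 * y * z + 1 = 0" by simp
  finally have "z = gz y \<or> z = g'" by simp
  thus "z = gz y"
  proof
    assume zg: "z = g'"
    have "cmod (gz y) = 1"
    proof (rule ccontr)
      assume "cmod (gz y) \<noteq> 1" hence "1 < cmod (gz y)" using ge1 by simp
      hence "1 * 1 < cmod (gz y) * cmod g'" using z1 zg by (intro mult_less_le_imp_less) auto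
      with p1 show False by simp
    qed
    hence "y = (gz y + cnj (gz y)) / 2" using norm1_inverse_cnj sum inv
      by (metis \<open>(gz y + inverse (gz y)) / 2 = y\<close>)
    hence "y = of_real (Re (gz y))" by (simp add: complex_eq_iff)
    moreover have "\<bar>Re (gz y)\<bar> \<le> 1" using \<open>cmod (gz y) = 1\<close> abs_Re_le_cmod by metis
    ultimately have "y \<in> seg" unfolding seg_def by (metis (mono_tags) Im_complex_of_real Re_complex_of_real mem_Collect_eq)
    with assms show ?thesis by simp
  qed simp
qed

lemma zc_gz: assumes "y \<notin> seg" shows "zc y = gz y"
proof -
  have "\<not> (Im y = 0 \<and> \<bar>Re y\<bar> \<le> 1)" using assms by (simp add: seg_def)
  hence "zc y = (THE z. 1 \<le> cmod z \<and> y = (z + inverse z) / 2)" unfolding zc_def by (rule if_not_P)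
  also have "\<dots> = gz y"
  proof (rule the_equality)
    show "1 \<le> cmod (gz y) \<and> y = (gz y + inverse (gz y)) / 2"
      using gz_props(1,2)[OF assms] by simp
    fix z assume "1 \<le> cmod z \<and> y = (z + inverse z) / 2"
    thus "z = gz y" using gz_props(3)[OF assms] by blast
  qed
  finally show ?thesis .
qed

lemma zc_props: "1 \<le> cmod (zc y)" "(zc y + inverse (zc y)) / 2 = y" "zc y \<noteq> 0"
proof -
  have "1 \<le> cmod (zc y) \<and> (zc y + inverse (zc y)) / 2 = y"
  proof (cases "y \<in> seg")
    case True thus ?thesis using zc_seg[OF True] by simp
  next
    case False thus ?thesis using zc_gz[OF False] gz_props(1,2)[OF False] by simp
  qed
  thus "1 \<le> cmod (zc y)" "(zc y + inverse (zc y)) / 2 = y" by auto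
  thus "zc y \<noteq> 0" by auto
qed

lemma zc_out: assumes "y \<notin> seg" shows "1 < cmod (zc y)"
proof (rule ccontr)
  assume "\<not> 1 < cmod (zc y)" hence n: "cmod (zc y) = 1" using zc_props(1)[of y] by simp
  hence "y = of_real (Re (zc y))" using zc_props(2)[of y] norm1_inverse_cnj[OF n]
    by (auto simp: complex_eq_iff)
  moreover have "\<bar>Re (zc y)\<bar> \<le> 1" using n abs_Re_le_cmod by metis
  ultimately have "y \<in> seg" unfolding seg_def by (metis (mono_tags) Im_complex_of_real Re_complex_of_real mem_Collect_eq)
  thus False using assms by simp
qed

lemma quad_roots:
  fixes u v :: complex
  assumes "u \<noteq> 0" "v \<noteq> 0" "v + inverse v = u + inverse u"
  shows "v = u \<or> v * u = 1"
proof -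
  have "(v - u) * (v * u - 1) = 0" using assms by (simp add: field_simps)
  thus ?thesis by auto
qed

lemma zc_root:
  assumes "v \<noteq> 0" "(v + inverse v) / 2 = y"
  shows "v = zc y \<or> v * zc y = 1"
  using quad_roots[OF zc_props(3) assms(1)] assms zc_props(2)[of y] by auto

lemma gz_holo: assumes "S \<inter> seg = {}" shows "gz holomorphic_on S"
proof -
  have "(\<lambda>y. y * (1 + csqrt (1 - 1 / y\<^sup>2))) holomorphic_on S"
    using not_seg_arg assms by (intro holomorphic_intros) auto
  thus ?thesis by (simp add: gz_def[abs_def])
qed

lemma zc_holo: assumes "S \<inter> seg = {}" shows "zc holomorphic_on S"
proof (rule holomorphic_transform[OF gz_holo[OF assms]])
  fix w assume "w \<in> S" hence "w \<notin> seg" using assms by auto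
  thus "gz w = zc w" by (simp add: zc_gz)
qed

lemma s_props:
  assumes "0 < cmod q" "cmod q < 1"
  shows "csqrt q \<noteq> 0" "cmod (csqrt q) < 1" "csqrt q * csqrt q \<noteq> 1"
proof -
  show "csqrt q \<noteq> 0" using assms by auto
  show "cmod (csqrt q) < 1" using assms by simp
  have "csqrt q * csqrt q = q" using power2_csqrt[of q] by (simp add: power2_eq_square)
  thus "csqrt q * csqrt q \<noteq> 1" using assms by auto
qed

lemma comp:
  assumes "R_ok q M R" "R < cmod y" "\<bar>a\<bar> \<le> int M" "\<bar>b\<bar> \<le> int M" "\<bar>a + b\<bar> \<le> int M"
  shows "sig (csqrt q powi b) (sig (csqrt q powi a) y) = sig (csqrt q powi (a + b)) y"
proof -
  have "etaP q a (etaP q b id) y = etaP q (a + b) id y"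
    using assms unfolding R_ok_def by blast
  thus ?thesis by (simp add: etaP_def)
qed

lemma H:
  fixes s v :: complex
  assumes s0: "s \<noteq> 0" and s1: "cmod s < 1" and v1: "cmod v = 1"
    and eq: "sig (inverse s) ((s * v + inverse (s * v)) / 2) = (v + inverse v) / 2"
  shows False
proof -
  define p where "p = (s * v + inverse (s * v)) / 2"
  have v0: "v \<noteq> 0" using v1 by auto
  have "s * v = zc p \<or> s * v * zc p = 1" by (rule zc_root) (use s0 v0 in \<open>simp_all add: p_def\<close>)
  moreover have "s * v \<noteq> zc p"
  proof
    assume "s * v = zc p"
    hence "cmod (zc p) = cmod s * cmod v" by (metis norm_mult)
    hence "cmod (zc p) < 1" using s1 v1 by simp
    with zc_props(1)[of p] show False by simp
  qed
  ultimately have zp: "zc p = inverse (s * v)" by (metis inverse_unique)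
  have "sig (inverse s) p = (inverse (s * s * v) + s * s * v) / 2"
    unfolding sig_def zp by (simp add: field_simps)
  hence "s * s * v + inverse (s * s * v) = v + inverse v" using eq p_def by (simp add: algebra_simps)
  hence "s * s * v = v \<or> s * s * v * v = 1" using quad_roots[of v "s * s * v"] s0 v0 by simp
  thus False
  proof
    assume "s * s * v = v" hence "s * s = 1" using v0 by simp
    hence "cmod s * cmod s = 1" by (metis norm_mult norm_one)
    moreover have "cmod s * cmod s \<le> cmod s" using s1 by (simp add: mult_left_le_one_le)
    ultimately show False using s1 by simp
  next
    assume "s * s * v * v = 1"
    hence "cmod s * cmod s * cmod v * cmod v = 1" by (metis norm_mult norm_one)
    hence "cmod s * cmod s = 1" using v1 by simp
    moreover have "cmod s * cmod s \<le> cmod s" using s1 by (simp add: mult_left_le_one_le)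
    ultimately show False using s1 by simp
  qed
qed

lemma sig_1: "sig 1 y = y"
  using zc_props(2)[of y] by (simp add: sig_def)

lemma R2:
  assumes ok: "R_ok q M R" and M: "1 \<le> M" and q: "0 < cmod q" "cmod q < 1" and y: "R < cmod y"
  shows "y \<notin> seg"
proof
  assume ys: "y \<in> seg"
  define s where "s = csqrt q"
  note sp = s_props[OF q, folded s_def]
  define u where "u = zc y"
  have u1: "cmod u = 1" using zc_seg(1)[OF ys] u_def by simp
  have "sig (csqrt q powi -1) (sig (csqrt q powi 1) y) = sig (csqrt q powi (1 + -1)) y"
    using M by (intro comp[OF ok y]) auto
  hence A: "sig (inverse s) (sig s y) = y" by (simp add: s_def power_int_minus sig_1)
  have B: "sig s y = (s * u + inverse (s * u)) / 2" by (simp add: sig_def u_def)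
  have C: "y = (u + inverse u) / 2" using zc_props(2)[of y] u_def by simp
  from A have "sig (inverse s) ((s * u + inverse (s * u)) / 2) = y" unfolding B .
  also note C
  finally show False using H[OF sp(1,2) u1] by blast
qed

lemma R3:
  assumes ok: "R_ok q M R" and q: "0 < cmod q" "cmod q < 1" and w: "R < cmod w"
    and j: "\<bar>j\<bar> + 1 \<le> int M"
  shows "(csqrt q powi j * zc w) * (csqrt q powi j * zc w) \<noteq> 1"
proof
  define s where "s = csqrt q"
  note sp = s_props[OF q, folded s_def]
  define v where "v = s powi j * zc w"
  assume "(csqrt q powi j * zc w) * (csqrt q powi j * zc w) = 1"
  hence vv: "v * v = 1" by (simp add: v_def s_def)
  hence "cmod v * cmod v = 1" by (metis norm_mult norm_one)
  hence v1: "cmod v = 1"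
  proof -
    have "sqrt (cmod v * cmod v) = cmod v" by simp
    with \<open>cmod v * cmod v = 1\<close> show ?thesis by simp
  qed
  have "sig (csqrt q powi -1) (sig (csqrt q powi (j + 1)) w) = sig (csqrt q powi (j + 1 + -1)) w"
    using j by (intro comp[OF ok w]) auto
  hence "sig (inverse s) (sig (s powi (j + 1)) w) = sig (s powi j) w"
    by (simp add: s_def power_int_minus)
  moreover have "s powi (j + 1) = s * s powi j" using sp(1) by (simp add: power_int_add)
  hence "sig (s powi (j + 1)) w = (s * v + inverse (s * v)) / 2" by (simp add: sig_def v_def mult.assoc)
  moreover have "sig (s powi j) w = (v + inverse v) / 2" by (simp add: sig_def v_def)
  ultimately show False using H[OF sp(1,2) v1] by simp
qed

lemma AW_at:
  assumes ok: "R_ok q M R" and q: "0 < cmod q" "cmod q < 1" and w: "R < cmod w"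
    and j: "\<bar>j\<bar> + 1 \<le> int M"
  shows "AW q F (sig (csqrt q powi j) w) =
           (F (sig (csqrt q powi (j + 1)) w) - F (sig (csqrt q powi (j - 1)) w)) /
           (sig (csqrt q powi (j + 1)) w - sig (csqrt q powi (j - 1)) w)"
    and "sig (csqrt q powi (j + 1)) w - sig (csqrt q powi (j - 1)) w \<noteq> 0"
proof -
  define s where "s = csqrt q"
  note sp = s_props[OF q, folded s_def]
  define v where "v = s powi j * zc w"
  have vv: "v * v \<noteq> 1" using R3[OF ok q w j] by (simp add: v_def s_def)
  have v0: "v \<noteq> 0" using sp(1) zc_props(3)[of w] by (simp add: v_def)
  define y where "y = sig (s powi j) w"
  have yv: "y = (v + inverse v) / 2" by (simp add: y_def sig_def v_def)
  have y1: "y \<noteq> 1"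
  proof
    assume "y = 1" hence "v + inverse v = 1 + inverse 1" using yv by simp
    hence "v = 1 \<or> v * 1 = 1" using quad_roots[of 1 v] v0 by simp
    thus False using vv by auto
  qed
  have y2: "y \<noteq> -1"
  proof
    assume "y = -1" hence "v + inverse v = -1 + inverse (-1)" using yv by simp
    hence "v = -1 \<or> v * -1 = 1" using quad_roots[of "-1" v] v0 by simp
    hence "v = -1" by (metis minus_minus mult_minus1_right)
    thus False using vv by simp
  qed
  have c1: "sig s y = sig (s powi (j + 1)) w"
    using comp[OF ok w, of j 1] j by (simp add: y_def s_def)
  have c2: "sig (inverse s) y = sig (s powi (j - 1)) w"
    using comp[OF ok w, of j "-1"] j by (simp add: y_def s_def power_int_minus)
  have pw1: "s powi (j + 1) * zc w = s * v" using sp(1) by (simp add: power_int_add v_def)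
  have pw2: "s powi (j - 1) * zc w = inverse s * v" using sp(1)
    by (simp add: power_int_diff v_def divide_inverse)
  have e1: "sig (s powi (j + 1)) w = (s * v + inverse (s * v)) / 2"
    unfolding sig_def pw1 ..
  have e2: "sig (s powi (j - 1)) w = (inverse s * v + inverse (inverse s * v)) / 2"
    unfolding sig_def pw2 ..
  show dn: "sig (csqrt q powi (j + 1)) w - sig (csqrt q powi (j - 1)) w \<noteq> 0"
  proof
    assume "sig (csqrt q powi (j + 1)) w - sig (csqrt q powi (j - 1)) w = 0"
    hence "inverse s * v + inverse (inverse s * v) = s * v + inverse (s * v)"
      using e1 e2 by (simp add: s_def)
    hence "inverse s * v = s * v \<or> inverse s * v * (s * v) = 1"
      using quad_roots[of "s * v" "inverse s * v"] sp(1) v0 by simp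
    thus False
    proof
      assume "inverse s * v = s * v" hence "inverse s = s" using v0 by simp
      hence "s * s = 1" using sp(1) by (metis right_inverse)
      thus False using sp(3) by (simp add: s_def)
    next
      assume "inverse s * v * (s * v) = 1" hence "v * v = 1" using sp(1) by (simp add: field_simps)
      thus False using vv by simp
    qed
  qed
  have "AW q F y = AW_quot q F y" using y1 y2 by (simp add: AW_def)
  also have "\<dots> = (F (sig (s powi (j + 1)) w) - F (sig (s powi (j - 1)) w)) /
           (sig (s powi (j + 1)) w - sig (s powi (j - 1)) w)"
    unfolding AW_quot_def eta_def etainv_def using c1 c2 by (simp add: s_def)
  finally show "AW q F (sig (csqrt q powi j) w) =
           (F (sig (csqrt q powi (j + 1)) w) - F (sig (csqrt q powi (j - 1)) w)) /
           (sig (csqrt q powi (j + 1)) w - sig (csqrt q powi (j - 1)) w)"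
    by (simp add: y_def s_def)
qed

lemma etaP0: "etaP q 0 F = F"
  by (rule ext) (simp add: etaP_def sig_1)

lemma phi_holo:
  assumes ok: "R_ok q M R" and q: "0 < cmod q" "cmod q < 1" and j: "\<bar>j\<bar> \<le> int M"
  shows "etaP q j id holomorphic_on {y. R < cmod y}"
proof (cases "M = 0")
  case True
  hence "j = 0" using j by simp
  thus ?thesis by (simp add: etaP0)
next
  case False
  define c where "c = csqrt q powi j"
  have c0: "c \<noteq> 0" using s_props(1)[OF q] by (simp add: c_def)
  have "{y. R < cmod y} \<inter> seg = {}" using R2[OF ok _ q] False by auto
  hence zh: "zc holomorphic_on {y. R < cmod y}" by (rule zc_holo)
  have "(\<lambda>w. (c * zc w + inverse (c * zc w)) / 2) holomorphic_on {y. R < cmod y}"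
    using c0 zc_props(3) by (intro holomorphic_intros zh) auto
  moreover have "etaP q j id = (\<lambda>w. (c * zc w + inverse (c * zc w)) / 2)"
    by (rule ext) (simp add: etaP_def sig_def c_def)
  ultimately show ?thesis by simp
qed

definition Dv :: "complex \<Rightarrow> (complex \<Rightarrow> complex) \<Rightarrow> nat \<Rightarrow> bool" where
  "Dv x g n \<longleftrightarrow> (\<exists>h r. 0 < r \<and> h holomorphic_on ball x r \<and> (\<forall>w\<in>ball x r. g w = (w - x) ^ n * h w))"

lemma Dv_lin:
  assumes "Dv x g1 n" "Dv x g2 n" "c1 holomorphic_on ball x r" "c2 holomorphic_on ball x r" "0 < r"
    and "\<forall>w\<in>ball x r. g w = c1 w * g1 w + c2 w * g2 w"
  shows "Dv x g n"
proof -
  obtain h1 r1 where 1: "0 < r1" "h1 holomorphic_on ball x r1" "\<forall>w\<in>ball x r1. g1 w = (w - x) ^ n * h1 w"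
    using assms(1) unfolding Dv_def by blast
  obtain h2 r2 where 2: "0 < r2" "h2 holomorphic_on ball x r2" "\<forall>w\<in>ball x r2. g2 w = (w - x) ^ n * h2 w"
    using assms(2) unfolding Dv_def by blast
  define \<rho> where "\<rho> = min r (min r1 r2)"
  have sub: "ball x \<rho> \<subseteq> ball x r" "ball x \<rho> \<subseteq> ball x r1" "ball x \<rho> \<subseteq> ball x r2"
    by (auto simp: \<rho>_def)
  have "(\<lambda>w. c1 w * h1 w + c2 w * h2 w) holomorphic_on ball x \<rho>"
    using holomorphic_on_subset[OF assms(3) sub(1)] holomorphic_on_subset[OF assms(4) sub(1)]
      holomorphic_on_subset[OF 1(2) sub(2)] holomorphic_on_subset[OF 2(2) sub(3)]
    by (intro holomorphic_intros)
  moreover have "\<forall>w\<in>ball x \<rho>. g w = (w - x) ^ n * (c1 w * h1 w + c2 w * h2 w)"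
  proof
    fix w assume w: "w \<in> ball x \<rho>"
    hence "g w = c1 w * g1 w + c2 w * g2 w" using assms(6) sub by auto
    also have "\<dots> = c1 w * ((w - x) ^ n * h1 w) + c2 w * ((w - x) ^ n * h2 w)"
    proof -
      have "w \<in> ball x r1" "w \<in> ball x r2" using w sub by blast+
      thus ?thesis using 1(3) 2(3) by simp
    qed
    finally show "g w = (w - x) ^ n * (c1 w * h1 w + c2 w * h2 w)" by (simp add: algebra_simps)
  qed
  moreover have "0 < \<rho>" using 1(1) 2(1) assms(5) by (simp add: \<rho>_def)
  ultimately show ?thesis unfolding Dv_def by blast
qed

lemma Dv_mult:
  assumes "Dv x g a" "Dv x h b"
  shows "Dv x (\<lambda>w. g w * h w) (a + b)"
proof -
  obtain h1 r1 where 1: "0 < r1" "h1 holomorphic_on ball x r1" "\<forall>w\<in>ball x r1. g w = (w - x) ^ a * h1 w"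
    using assms(1) unfolding Dv_def by blast
  obtain h2 r2 where 2: "0 < r2" "h2 holomorphic_on ball x r2" "\<forall>w\<in>ball x r2. h w = (w - x) ^ b * h2 w"
    using assms(2) unfolding Dv_def by blast
  define \<rho> where "\<rho> = min r1 r2"
  have sub: "ball x \<rho> \<subseteq> ball x r1" "ball x \<rho> \<subseteq> ball x r2" by (auto simp: \<rho>_def)
  have "(\<lambda>w. h1 w * h2 w) holomorphic_on ball x \<rho>"
    using holomorphic_on_subset[OF 1(2) sub(1)] holomorphic_on_subset[OF 2(2) sub(2)]
    by (intro holomorphic_intros)
  moreover have "\<forall>w\<in>ball x \<rho>. g w * h w = (w - x) ^ (a + b) * (h1 w * h2 w)"
  proof
    fix w assume w: "w \<in> ball x \<rho>"
    have "w \<in> ball x r1" "w \<in> ball x r2" using w sub by blast+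
    hence "g w * h w = ((w - x) ^ a * h1 w) * ((w - x) ^ b * h2 w)" using 1(3) 2(3) by simp
    thus "g w * h w = (w - x) ^ (a + b) * (h1 w * h2 w)" by (simp add: power_add algebra_simps)
  qed
  moreover have "0 < \<rho>" using 1(1) 2(1) by (simp add: \<rho>_def)
  ultimately show ?thesis unfolding Dv_def by blast
qed

lemma Dv_mono:
  assumes "Dv x g k" "n \<le> k"
  shows "Dv x g n"
proof -
  obtain h r where 1: "0 < r" "h holomorphic_on ball x r" "\<forall>w\<in>ball x r. g w = (w - x) ^ k * h w"
    using assms(1) unfolding Dv_def by blast
  have "(\<lambda>w. (w - x) ^ (k - n) * h w) holomorphic_on ball x r"
    using 1(2) by (intro holomorphic_intros)
  moreover have "\<forall>w\<in>ball x r. g w = (w - x) ^ n * ((w - x) ^ (k - n) * h w)"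
  proof
    fix w assume "w \<in> ball x r"
    hence "g w = (w - x) ^ k * h w" using 1(3) by auto
    also have "(w - x) ^ k = (w - x) ^ n * (w - x) ^ (k - n)"
      using assms(2) by (simp flip: power_add)
    finally show "g w = (w - x) ^ n * ((w - x) ^ (k - n) * h w)" by (simp add: mult.assoc)
  qed
  ultimately show ?thesis using 1(1) unfolding Dv_def by blast
qed

lemma Dv_holo:
  assumes "0 < r" "g holomorphic_on ball x r"
  shows "Dv x g 0"
  using assms unfolding Dv_def by (intro exI[of _ g] exI[of _ r]) auto

lemma Dv_zero:
  assumes "\<forall>w. g w = 0"
  shows "Dv x g n"
  unfolding Dv_def using assms by (intro exI[of _ "\<lambda>_. 0"] exI[of _ 1]) auto

lemma Dv_prod:
  assumes "finite I" "\<forall>i\<in>I. Dv x (g i) (k i)"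
  shows "Dv x (\<lambda>w. \<Prod>i\<in>I. g i w) (\<Sum>i\<in>I. k i)"
  using assms
proof (induction I rule: finite_induct)
  case empty
  show ?case by simp (rule Dv_holo[of 1], auto)
next
  case (insert i I)
  have "Dv x (\<lambda>w. g i w * (\<Prod>i\<in>I. g i w)) (k i + (\<Sum>i\<in>I. k i))"
    using insert by (intro Dv_mult) auto
  thus ?case using insert by simp
qed

lemma nu0_Dv: "nu0 g x = Sup {enat n | n. Dv x g n}"
  unfolding nu0_def Dv_def ..

lemma nu0_geI:
  assumes "\<And>n. enat n \<le> a \<Longrightarrow> Dv x g n"
  shows "a \<le> nu0 g x"
  unfolding nu0_Dv le_Sup_iff
proof (intro allI impI)
  fix y assume "y < a"
  then obtain k where k: "y = enat k" by (cases y) auto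
  have "eSuc y \<le> a" using \<open>y < a\<close> by (rule ileI1)
  hence "enat (Suc k) \<le> a" using k by (simp add: eSuc_enat)
  hence "Dv x g (Suc k)" by (rule assms)
  thus "\<exists>b\<in>{enat n |n. Dv x g n}. y < b" using k by (intro bexI[of _ "enat (Suc k)"]) auto
qed

lemma nu0_Dv_le:
  assumes "0 < n" "enat n \<le> nu0 g x"
  shows "Dv x g n"
proof -
  have "enat (n - 1) < Sup {enat n | n. Dv x g n}" using assms nu0_Dv[of g x]
    by (metis One_nat_def Suc_pred enat_ord_simps(2) lessI order_less_le_trans)
  then obtain b where "b \<in> {enat n | n. Dv x g n}" "enat (n - 1) < b" unfolding less_Sup_iff by blast
  then obtain k where k: "Dv x g k" "n - 1 < k" by auto
  have "n \<le> k" using k(2) assms(1) by linarith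
  from Dv_mono[OF k(1) this] show ?thesis .
qed

lemma enat_sum_split:
  fixes a :: "nat \<Rightarrow> enat"
  assumes "finite I" "enat n \<le> (\<Sum>i\<in>I. a i)"
  shows "\<exists>\<nu>. (\<forall>i\<in>I. enat (\<nu> i) \<le> a i) \<and> n \<le> (\<Sum>i\<in>I. \<nu> i)"
  using assms
proof (induction I arbitrary: n rule: finite_induct)
  case empty
  thus ?case by (auto simp: zero_enat_def)
next
  case (insert i I)
  have le: "enat n \<le> a i + (\<Sum>i\<in>I. a i)" using insert by simp
  show ?case
  proof (cases "a i")
    case infinity
    define \<nu> where "\<nu> = (\<lambda>_::nat. 0::nat)(i := n)"
    have "\<forall>j\<in>insert i I. enat (\<nu> j) \<le> a j" using infinity by (auto simp: \<nu>_def zero_enat_def[symmetric])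
    moreover have "n \<le> (\<Sum>j\<in>insert i I. \<nu> j)" using insert by (simp add: \<nu>_def)
    ultimately show ?thesis by blast
  next
    case (enat k)
    have "enat (n - k) \<le> (\<Sum>i\<in>I. a i)"
    proof (cases "(\<Sum>i\<in>I. a i)")
      case (enat l) thus ?thesis using le \<open>a i = enat k\<close> by simp
    qed simp
    then obtain \<nu> where \<nu>: "\<forall>j\<in>I. enat (\<nu> j) \<le> a j" "n - k \<le> (\<Sum>j\<in>I. \<nu> j)"
      using insert.IH by blast
    define \<nu>' where "\<nu>' = \<nu>(i := k)"
    have "\<forall>j\<in>insert i I. enat (\<nu>' j) \<le> a j" using \<nu>(1) insert(2) enat by (auto simp: \<nu>'_def)
    moreover have "(\<Sum>j\<in>I. \<nu>' j) = (\<Sum>j\<in>I. \<nu> j)" using insert(2)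
      by (intro sum.cong) (auto simp: \<nu>'_def)
    hence "n \<le> (\<Sum>j\<in>insert i I. \<nu>' j)" using insert \<nu>(2) by (simp add: \<nu>'_def)
    ultimately show ?thesis by blast
  qed
qed

lemma R_ok_Suc:
  assumes "R_ok q (Suc N) R" shows "R_ok q N R"
proof -
  have aux: "\<And>a::int. a \<le> int N \<Longrightarrow> a \<le> int (Suc N)" by simp
  show ?thesis using assms aux le_SucI unfolding R_ok_def by meson
qed

lemma all_le_Suc: "(\<forall>t\<le>Suc N. P t) \<longleftrightarrow> P 0 \<and> (\<forall>t\<le>N. P (Suc t))"
proof
  assume "\<forall>t\<le>Suc N. P t" thus "P 0 \<and> (\<forall>t\<le>N. P (Suc t))" by auto
next
  assume B: "P 0 \<and> (\<forall>t\<le>N. P (Suc t))"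
  show "\<forall>t\<le>Suc N. P t"
  proof (intro allI impI)
    fix t assume "t \<le> Suc N" thus "P t" using B by (cases t) auto
  qed
qed

lemma ball_in:
  assumes "w \<in> ball x (cmod x - R)" shows "R < cmod w"
proof -
  have "cmod x - cmod w \<le> cmod (x - w)" by (rule norm_triangle_ineq2)
  also have "\<dots> < cmod x - R" using assms by (simp add: dist_norm)
  finally show ?thesis by simp
qed

lemma equiv:
  assumes q: "0 < cmod q" "cmod q < 1" and x: "R < cmod x"
  shows "R_ok q M R \<Longrightarrow> (\<forall>j. \<bar>j\<bar> \<le> int M \<and> even (j + int M) \<longrightarrow> Dv x (etaP q j F) n) \<longleftrightarrow>
           (\<forall>t\<le>M. Dv x (Aop q (M - t) ((AW q ^^ t) F)) n)"
proof (induction M arbitrary: F)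
  case 0
  have A0: "Aop q 0 F = F" by (rule ext) (simp add: Aop_def)
  have "(\<forall>j. \<bar>j\<bar> \<le> int 0 \<and> even (j + int 0) \<longrightarrow> Dv x (etaP q j F) n) \<longleftrightarrow> Dv x F n"
  proof
    assume "\<forall>j. \<bar>j\<bar> \<le> int 0 \<and> even (j + int 0) \<longrightarrow> Dv x (etaP q j F) n"
    hence "Dv x (etaP q 0 F) n" by simp
    thus "Dv x F n" by (simp add: etaP0)
  next
    assume "Dv x F n"
    thus "\<forall>j. \<bar>j\<bar> \<le> int 0 \<and> even (j + int 0) \<longrightarrow> Dv x (etaP q j F) n" by (simp add: etaP0)
  qed
  thus ?case using A0 by simp
next
  case (Suc N)
  have ok: "R_ok q (Suc N) R" by fact
  have okN: "R_ok q N R" using ok by (rule R_ok_Suc)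
  note IH = Suc.IH[OF okN]
  define m where "m = int (Suc N)"
  define r where "r = cmod x - R"
  have r0: "0 < r" using x by (simp add: r_def)
  have inS: "\<And>w. w \<in> ball x r \<Longrightarrow> R < cmod w" using ball_in r_def by blast
  have subS: "ball x r \<subseteq> {y. R < cmod y}" using inS by blast
  define d where "d = (\<lambda>j w. etaP q (j + 1) id w - etaP q (j - 1) id w)"
  have dh: "d j holomorphic_on ball x r" if "\<bar>j\<bar> \<le> int N" for j
  proof -
    have "etaP q (j + 1) id holomorphic_on ball x r" "etaP q (j - 1) id holomorphic_on ball x r"
      using that by (auto intro!: holomorphic_on_subset[OF phi_holo[OF ok q] subS])
    thus ?thesis unfolding d_def by (intro holomorphic_intros)
  qed
  have dnz: "d j w \<noteq> 0" if "\<bar>j\<bar> \<le> int N" "w \<in> ball x r" for j w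
    using AW_at(2)[OF ok q inS[OF that(2)], of j] that by (simp add: d_def etaP_def)
  have dih: "(\<lambda>w. inverse (d j w)) holomorphic_on ball x r" if "\<bar>j\<bar> \<le> int N" for j
    using dh[OF that] dnz[OF that] by (intro holomorphic_intros) auto
  have dih': "(\<lambda>w. - inverse (d j w)) holomorphic_on ball x r" if "\<bar>j\<bar> \<le> int N" for j
    by (rule holomorphic_on_minus[OF dih[OF that]])
  have K1: "etaP q j (AW q F) w = inverse (d j w) * etaP q (j + 1) F w + (- inverse (d j w)) * etaP q (j - 1) F w"
    if "\<bar>j\<bar> \<le> int N" "w \<in> ball x r" for j w
  proof -
    have "etaP q j (AW q F) w = AW q F (sig (csqrt q powi j) w)" by (simp add: etaP_def)
    also have "\<dots> = (etaP q (j + 1) F w - etaP q (j - 1) F w) / d j w"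
      using AW_at(1)[OF ok q inS[OF that(2)], of j F] that by (simp add: d_def etaP_def)
    finally show ?thesis by (simp add: divide_inverse algebra_simps)
  qed
  have Aform: "\<forall>w\<in>ball x r. Aop q (Suc N) F w = (\<lambda>_. 1/2) w * etaP q m F w + (\<lambda>_. 1/2) w * etaP q (- m) F w"
    by (simp add: Aop_def m_def add_divide_distrib)
  have cst: "(\<lambda>_. c) holomorphic_on ball x r" for c :: complex by (rule holomorphic_on_const)
  have Qsplit: "(\<forall>t\<le>Suc N. Dv x (Aop q (Suc N - t) ((AW q ^^ t) F)) n) \<longleftrightarrow>
      Dv x (Aop q (Suc N) F) n \<and> (\<forall>t\<le>N. Dv x (Aop q (N - t) ((AW q ^^ t) (AW q F))) n)"
    by (subst all_le_Suc) (simp add: funpow_Suc_right del: funpow.simps)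
  show ?case
  proof
    assume P: "\<forall>j. \<bar>j\<bar> \<le> int (Suc N) \<and> even (j + int (Suc N)) \<longrightarrow> Dv x (etaP q j F) n"
    have P': "Dv x (etaP q j F) n" if "\<bar>j\<bar> \<le> m" "even (j + m)" for j
      using P that by (simp add: m_def)
    have "Dv x (Aop q (Suc N) F) n"
      by (rule Dv_lin[OF P'[of m] P'[of "-m"] cst cst r0 Aform]) (auto simp: m_def)
    moreover have "\<forall>j. \<bar>j\<bar> \<le> int N \<and> even (j + int N) \<longrightarrow> Dv x (etaP q j (AW q F)) n"
    proof (intro allI impI)
      fix j assume j: "\<bar>j\<bar> \<le> int N \<and> even (j + int N)"
      have e1: "even (j + 1 + m)" "even (j - 1 + m)" using j by (auto simp: m_def)
      show "Dv x (etaP q j (AW q F)) n"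
        by (rule Dv_lin[OF P'[of "j + 1"] P'[of "j - 1"] dih[of j] dih'[of j] r0])
           (use j e1 K1 in \<open>auto simp: m_def\<close>)
    qed
    hence "\<forall>t\<le>N. Dv x (Aop q (N - t) ((AW q ^^ t) (AW q F))) n" using IH by blast
    ultimately show "\<forall>t\<le>Suc N. Dv x (Aop q (Suc N - t) ((AW q ^^ t) F)) n" using Qsplit by blast
  next
    assume Q: "\<forall>t\<le>Suc N. Dv x (Aop q (Suc N - t) ((AW q ^^ t) F)) n"
    have A: "Dv x (Aop q (Suc N) F) n" using Q Qsplit by blast
    have PN: "\<forall>j. \<bar>j\<bar> \<le> int N \<and> even (j + int N) \<longrightarrow> Dv x (etaP q j (AW q F)) n"
      using Q Qsplit IH by blast
    have diff: "Dv x (\<lambda>w. etaP q (j + 1) F w - etaP q (j - 1) F w) n"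
      if j: "\<bar>j\<bar> \<le> int N" "even (j + int N)" for j
    proof (rule Dv_lin[of x "etaP q j (AW q F)" n "etaP q j (AW q F)" "d j" r "\<lambda>_. 0"])
      show "Dv x (etaP q j (AW q F)) n" using PN j by blast
      thus "Dv x (etaP q j (AW q F)) n" .
      show "d j holomorphic_on ball x r" using dh j by blast
      show "(\<lambda>_. 0) holomorphic_on ball x r" by (rule cst)
      show "0 < r" by (rule r0)
      show "\<forall>w\<in>ball x r. etaP q (j + 1) F w - etaP q (j - 1) F w =
              d j w * etaP q j (AW q F) w + 0 * etaP q j (AW q F) w"
      proof
        fix w assume w: "w \<in> ball x r"
        have "d j w \<noteq> 0" using dnz j w by blast
        thus "etaP q (j + 1) F w - etaP q (j - 1) F w =
              d j w * etaP q j (AW q F) w + 0 * etaP q j (AW q F) w"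
          using K1[OF j(1) w] by (simp add: field_simps)
      qed
    qed
    have tele: "i \<le> Suc N \<Longrightarrow> Dv x (\<lambda>w. etaP q (- m + 2 * int i) F w - etaP q (- m) F w) n" for i
    proof (induction i)
      case 0 show ?case by (rule Dv_zero) simp
    next
      case (Suc i)
      define j where "j = - m + 2 * int i + 1"
      have j: "\<bar>j\<bar> \<le> int N" "even (j + int N)" using Suc.prems by (auto simp: j_def m_def)
      have ej1: "j + 1 = - m + 2 * int (Suc i)" and ej2: "j - 1 = - m + 2 * int i" by (simp_all add: j_def)
      have D1: "Dv x (\<lambda>w. etaP q (- m + 2 * int (Suc i)) F w - etaP q (- m + 2 * int i) F w) n"
        using diff[OF j] unfolding ej1 ej2 .
      show ?case
        by (rule Dv_lin[OF Suc.IH D1 cst[of 1] cst[of 1] r0]) (use Suc.prems in auto)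
    qed
    have Tm: "Dv x (\<lambda>w. etaP q m F w - etaP q (- m) F w) n"
      using tele[of "Suc N"] by (simp add: m_def)
    have Em: "Dv x (etaP q (- m) F) n"
      by (rule Dv_lin[OF A Tm cst[of 1] cst[of "-1/2"] r0]) (simp add: Aop_def m_def field_simps)
    show "\<forall>j. \<bar>j\<bar> \<le> int (Suc N) \<and> even (j + int (Suc N)) \<longrightarrow> Dv x (etaP q j F) n"
    proof (intro allI impI)
      fix k assume k: "\<bar>k\<bar> \<le> int (Suc N) \<and> even (k + int (Suc N))"
      define i where "i = nat ((k + m) div 2)"
      have ki: "- m + 2 * int i = k" using k
        by (auto simp: i_def m_def)
      have "i \<le> Suc N" using k by (auto simp: i_def m_def)
      from tele[OF this] have "Dv x (\<lambda>w. etaP q k F w - etaP q (- m) F w) n" unfolding ki .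
      thus "Dv x (etaP q k F) n"
        by (rule Dv_lin[OF _ Em cst[of 1] cst[of 1] r0]) simp
    qed
  qed
qed

theorem lemma6p4:
  fixes q :: complex and M m :: nat and fs :: "nat \<Rightarrow> complex \<Rightarrow> complex"
    and R :: real and x :: complex
  assumes "0 < cmod q" and "cmod q < 1"
    and "\<forall>i\<in>{1..m}. fs i holomorphic_on UNIV"
    and "R_ok q M R"
    and "R < cmod x"
  shows "(MIN t\<in>{0..M}. nu0 (Aop q (M - t) ((AW q ^^ t) (\<lambda>y. \<Prod>i=1..m. fs i y))) x)
         \<ge> (\<Sum>i=1..m. MIN t\<in>{0..M}. nu0 (Aop q (M - t) ((AW q ^^ t) (fs i))) x)"
proof -
  note q = assms(1,2) and ok = assms(4) and x = assms(5)
  define a where "a i = (MIN t\<in>{0..M}. nu0 (Aop q (M - t) ((AW q ^^ t) (fs i))) x)" for i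
  have r0: "0 < cmod x - R" using x by simp
  have key: "(\<Sum>i=1..m. a i) \<le> nu0 (Aop q (M - t0) ((AW q ^^ t0) (\<lambda>y. \<Prod>i=1..m. fs i y))) x"
    if t0: "t0 \<in> {0..M}" for t0
  proof (rule nu0_geI)
    fix n assume n: "enat n \<le> (\<Sum>i=1..m. a i)"
    obtain \<nu> where \<nu>: "\<forall>i\<in>{1..m}. enat (\<nu> i) \<le> a i" "n \<le> (\<Sum>i=1..m. \<nu> i)"
      using enat_sum_split[OF _ n] by auto
    have Pi: "Dv x (etaP q j (fs i)) (\<nu> i)"
      if i: "i \<in> {1..m}" and j: "\<bar>j\<bar> \<le> int M \<and> even (j + int M)" for i j
    proof (cases "\<nu> i = 0")
      case True
      have e: "etaP q j (fs i) = fs i \<circ> etaP q j id" by (rule ext) (simp add: etaP_def)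
      have "etaP q j id holomorphic_on ball x (cmod x - R)"
        using j ball_in by (intro holomorphic_on_subset[OF phi_holo[OF ok q]]) auto
      moreover have "fs i holomorphic_on (etaP q j id ` ball x (cmod x - R))"
        using assms(3) i holomorphic_on_subset[of "fs i" UNIV] by blast
      ultimately have "(fs i \<circ> etaP q j id) holomorphic_on ball x (cmod x - R)"
        by (rule holomorphic_on_compose)
      hence "Dv x (etaP q j (fs i)) 0" unfolding e by (rule Dv_holo[OF r0])
      thus ?thesis using True by simp
    next
      case False
      have "\<forall>t\<le>M. Dv x (Aop q (M - t) ((AW q ^^ t) (fs i))) (\<nu> i)"
      proof (intro allI impI)
        fix t assume t: "t \<le> M"
        have "a i \<le> nu0 (Aop q (M - t) ((AW q ^^ t) (fs i))) x"
          unfolding a_def using t by (intro Min_le) auto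
        hence "enat (\<nu> i) \<le> nu0 (Aop q (M - t) ((AW q ^^ t) (fs i))) x"
          using \<nu>(1) i by (meson order_trans)
        thus "Dv x (Aop q (M - t) ((AW q ^^ t) (fs i))) (\<nu> i)"
          using False by (intro nu0_Dv_le) auto
      qed
      thus ?thesis using equiv[OF q x ok, of "fs i" "\<nu> i"] j by blast
    qed
    have "Dv x (etaP q j (\<lambda>y. \<Prod>i=1..m. fs i y)) (\<Sum>i=1..m. \<nu> i)"
      if j: "\<bar>j\<bar> \<le> int M \<and> even (j + int M)" for j
    proof -
      have "etaP q j (\<lambda>y. \<Prod>i=1..m. fs i y) = (\<lambda>w. \<Prod>i\<in>{1..m}. etaP q j (fs i) w)"
        by (rule ext) (simp add: etaP_def)
      moreover have "Dv x (\<lambda>w. \<Prod>i\<in>{1..m}. etaP q j (fs i) w) (\<Sum>i\<in>{1..m}. \<nu> i)"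
        using Pi j by (intro Dv_prod) auto
      ultimately show ?thesis by simp
    qed
    hence "\<forall>t\<le>M. Dv x (Aop q (M - t) ((AW q ^^ t) (\<lambda>y. \<Prod>i=1..m. fs i y))) (\<Sum>i=1..m. \<nu> i)"
      using equiv[OF q x ok, of "\<lambda>y. \<Prod>i=1..m. fs i y" "\<Sum>i=1..m. \<nu> i"] by blast
    hence "Dv x (Aop q (M - t0) ((AW q ^^ t0) (\<lambda>y. \<Prod>i=1..m. fs i y))) (\<Sum>i=1..m. \<nu> i)"
      using t0 by auto
    thus "Dv x (Aop q (M - t0) ((AW q ^^ t0) (\<lambda>y. \<Prod>i=1..m. fs i y))) n"
      using \<nu>(2) by (rule Dv_mono)
  qed
  have "(\<Sum>i=1..m. a i) \<le> (MIN t\<in>{0..M}. nu0 (Aop q (M - t) ((AW q ^^ t) (\<lambda>y. \<Prod>i=1..m. fs i y))) x)"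
    using key by (subst Min_ge_iff) auto
  thus ?thesis by (simp add: a_def)
qed

end
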